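(* Let $J\subseteq S$. For any $w\in\mathfrak{S}_n^J$ there is a unique minimal $(J,132)$-avoiding permutation $w'\in\mathfrak{S}_n^J$ with $w\le_S w'$; that is, $w'$ is $(J,132)$-avoiding, $w\le_S w'$, and $w'\le_S v$ for every $(J,132)$-avoiding $v\in\mathfrak{S}_n^J$ with $w\le_S v$.
   Context: $\mathfrak{S}_n$ is the symmetric group on $[n]$, $s_i=(i,i+1)$, $S=\{s_1,\dots,s_{n-1}\}$, one-line notation $w=w_1\cdots w_n$, $\mathrm{inv}(w)=\{(i,j):i<j,\ w_i>w_j\}$, weak order $u\le_S v\iff\mathrm{inv}(u)\subseteq\mathrm{inv}(v)$. For $J\subseteq S$, $\mathfrak{S}_n^J$ is the set of $w$ with $w_i<w_{i+1}$ whenever $s_i\in J$. Writing $J=S\setminus\{s_{j_1},\dots,s_{j_r}\}$ with $j_1<\dots<j_r$, the $J$-regions are $\{1,\dots,j_1\},\{j_1+1,\dots,j_2\},\dots,\{j_r+1,\dots,n\}$. An element $w\in\mathfrak{S}_n^J$ has a $(J,132)$-pattern if there are indices $i<j<k$ in pairwise different $J$-regions with $w_i<w_k<w_j$ and $w_k=w_i+1$; otherwise it is $(J,132)$-avoiding. *)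

theory Defs
  imports "HOL-Combinatorics.Permutations"
begin

text \<open>Permutations of [n] are functions w :: nat => nat with w permutes {1..n};
 w i is the i-th letter of the one-line notation. A subset J of S is represented
 by the set of indices i (with 1 <= i < n) such that s_i is in J.\<close>

definition inversions :: "nat \<Rightarrow> (nat \<Rightarrow> nat) \<Rightarrow> (nat \<times> nat) set" where
  "inversions n w = {(i, j). 1 \<le> i \<and> i < j \<and> j \<le> n \<and> w i > w j}"

definition weak_le :: "nat \<Rightarrow> (nat \<Rightarrow> nat) \<Rightarrow> (nat \<Rightarrow> nat) \<Rightarrow> bool" where
  "weak_le n u v \<longleftrightarrow> inversions n u \<subseteq> inversions n v"

definition parabolic :: "nat \<Rightarrow> nat set \<Rightarrow> (nat \<Rightarrow> nat) set" where
  "parabolic n J = {w. w permutes {1..n} \<and> (\<forall>i\<in>J. w i < w (i + 1))}"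

definition same_region :: "nat set \<Rightarrow> nat \<Rightarrow> nat \<Rightarrow> bool" where
  "same_region J i j \<longleftrightarrow> (\<forall>k. i \<le> k \<and> k < j \<longrightarrow> k \<in> J)"

definition has_J132 :: "nat \<Rightarrow> nat set \<Rightarrow> (nat \<Rightarrow> nat) \<Rightarrow> bool" where
  "has_J132 n J w \<longleftrightarrow> (\<exists>i j k. 1 \<le> i \<and> i < j \<and> j < k \<and> k \<le> n \<and>
      \<not> same_region J i j \<and> \<not> same_region J j k \<and> \<not> same_region J i k \<and>
      w i < w k \<and> w k < w j \<and> w k = w i + 1)"

definition J132_avoiding :: "nat \<Rightarrow> nat set \<Rightarrow> (nat \<Rightarrow> nat) \<Rightarrow> bool" where
  "J132_avoiding n J w \<longleftrightarrow> \<not> has_J132 n J w"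

end

theory Submission
  imports Defs
begin

lemma sr_mono:
  assumes "a \<le> b" "c \<le> d" "\<not> same_region J b c"
  shows "\<not> same_region J a d"
  using assms unfolding same_region_def by (metis le_trans less_le_trans)

lemma forced:
  assumes w: "w permutes {1..n}" and v: "v permutes {1..n}"
    and av: "J132_avoiding n J v" and le: "weak_le n w v"
    and p: "1 \<le> i" "i < j" "j < k" "k \<le> n" "\<not> same_region J i j" "\<not> same_region J j k"
      "w k < w j" "w k = w i + 1"
  shows "v i > v k"
proof (rule ccontr)
  assume "\<not> v i > v k"
  moreover have "v i \<noteq> v k" using permutes_inj[OF v] p by (metis inj_eq less_irrefl less_trans)
  ultimately have ik: "v i < v k" by simp
  have inv_le: "\<And>s t. 1 \<le> s \<Longrightarrow> s < t \<Longrightarrow> t \<le> n \<Longrightarrow> w s > w t \<Longrightarrow> v s > v t"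
    using le unfolding weak_le_def inversions_def by blast
  have jk: "v j > v k" using inv_le[of j k] p by simp
  have btw: "\<not> (v i < v m \<and> v m < v k)" if m: "i < m" "m < k" for m
  proof -
    have "w m \<noteq> w i" "w m \<noteq> w k" using permutes_inj[OF w] m by (metis inj_eq less_irrefl)+
    then have "w m < w i \<or> w m > w k" using p by linarith
    then show ?thesis
    proof
      assume "w m < w i" then have "v m < v i" using inv_le[of i m] m p by simp
      then show ?thesis by simp
    next
      assume "w m > w k" then have "v m > v k" using inv_le[of m k] m p by simp
      then show ?thesis by simp
    qed
  qed
  have vin: "\<And>x. x \<in> {1..n} \<Longrightarrow> v x \<in> {1..n}" using permutes_in_image[OF v] by blast
  have iin: "\<And>x. x \<in> {1..n} \<Longrightarrow> inv v x \<in> {1..n}" using permutes_in_image[OF permutes_inv[OF v]] by blast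
  define C where "C = {c. v i \<le> c \<and> c < v k \<and> inv v c < j}"
  have fC: "finite C" unfolding C_def by auto
  have "v i \<in> C" unfolding C_def using ik p by (simp add: permutes_inverses[OF v])
  then have neC: "C \<noteq> {}" by auto
  define c where "c = Max C"
  have cC: "c \<in> C" using fC neC c_def by simp
  have cmax: "\<And>x. x \<in> C \<Longrightarrow> x \<le> c" using fC c_def by simp
  define s where "s = inv v c"
  define t where "t = inv v (c + 1)"
  have vs: "v s = c" "v t = c + 1" unfolding s_def t_def by (simp_all add: permutes_inverses[OF v])
  have c1: "v i \<le> c" "c < v k" "s < j" using cC unfolding C_def s_def by auto
  have vi1: "v i \<ge> 1" "v k \<le> n" using vin[of i] vin[of k] p by auto
  have sin: "s \<in> {1..n}" unfolding s_def using iin c1 vi1 by auto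
  have tin: "t \<in> {1..n}" unfolding t_def using iin c1 vi1 by auto
  have "t \<ge> j"
  proof (rule ccontr)
    assume "\<not> t \<ge> j"
    show False
    proof (cases "c + 1 < v k")
      case True
      then have "c + 1 \<in> C" unfolding C_def t_def using c1 \<open>\<not> t \<ge> j\<close> t_def by auto
      then show False using cmax by fastforce
    next
      case False
      then have "c + 1 = v k" using c1 by simp
      then have "t = k" unfolding t_def by (simp add: permutes_inverses[OF v])
      then show False using \<open>\<not> t \<ge> j\<close> p by simp
    qed
  qed
  moreover have "t \<noteq> j" using vs jk c1 by auto
  ultimately have tj: "j < t" by simp
  have sj: "\<not> same_region J s j"
  proof (cases "s \<le> i")
    case True then show ?thesis using sr_mono[of s i j j J] p by simp
  next
    case False
    then have "i < s" by simp
    moreover have "v s \<noteq> v i" using False permutes_inj[OF v] by (metis inj_eq order_refl)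
    ultimately show ?thesis using btw[of s] c1 p vs by simp
  qed
  have jt: "\<not> same_region J j t"
  proof (cases "k \<le> t")
    case True then show ?thesis using sr_mono[of j j k t J] p by simp
  next
    case False
    then have "t < k" by simp
    moreover have "v t \<noteq> v k" using False permutes_inj[OF v] by (metis inj_eq order_refl)
    ultimately show ?thesis using btw[of t] c1 p vs tj by simp
  qed
  have st: "\<not> same_region J s t" using sr_mono[of s s j t J] sj tj by simp
  have "has_J132 n J v"
    unfolding has_J132_def
    apply (rule exI[of _ s], rule exI[of _ j], rule exI[of _ t])
    using sin tin c1 tj sj jt st vs jk by auto
  then show False using av unfolding J132_avoiding_def by simp
qed

lemma transp_less:
  fixes a x y :: nat
  assumes "x \<noteq> y" "\<not> (x = a \<and> y = a + 1)" "\<not> (x = a + 1 \<and> y = a)"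
  shows "(transpose a (a+1) x < transpose a (a+1) y) = (x < y)"
proof -
  have "transpose a (a+1) x = (if x = a then a+1 else if x = a+1 then a else x)"
       "transpose a (a+1) y = (if y = a then a+1 else if y = a+1 then a else y)"
    by (simp_all add: transpose_def)
  then show ?thesis using assms by (simp split: if_split) linarith
qed

lemma step:
  assumes w: "w \<in> parabolic n J"
    and p: "1 \<le> i" "i < j" "j < k" "k \<le> n" "w k = w i + 1"
  defines "w' \<equiv> transpose (w i) (w i + 1) \<circ> w"
  shows "w' \<in> parabolic n J" "inversions n w' = insert (i,k) (inversions n w)"
    "(i,k) \<notin> inversions n w"
proof -
  have wp: "w permutes {1..n}" using w unfolding parabolic_def by simp
  have inj: "\<And>x y. w x = w y \<Longrightarrow> x = y" using permutes_inj[OF wp] unfolding inj_def by blast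
  have win: "w i \<in> {1..n}" "w k \<in> {1..n}" using permutes_in_image[OF wp, of i] permutes_in_image[OF wp, of k] p by simp_all
  have cmp: "(w' s < w' t) = (w s < w t)" if "s \<noteq> t" "\<not> (s = i \<and> t = k)" "\<not> (s = k \<and> t = i)" for s t
  proof -
    have "w s \<noteq> w t" using inj that(1) by blast
    moreover have "\<not> (w s = w i \<and> w t = w i + 1)"
    proof
      assume "w s = w i \<and> w t = w i + 1"
      then have "s = i" "t = k" using inj[of s i] inj[of t k] p(5) by auto
      then show False using that(2) by simp
    qed
    moreover have "\<not> (w s = w i + 1 \<and> w t = w i)"
    proof
      assume "w s = w i + 1 \<and> w t = w i"
      then have "s = k" "t = i" using inj[of s k] inj[of t i] p(5) by auto
      then show False using that(3) by simp
    qed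
    ultimately show ?thesis unfolding w'_def using transp_less by simp
  qed
  have wik: "w' i = w i + 1" "w' k = w i" unfolding w'_def using p by auto
  show "w' \<in> parabolic n J"
    unfolding parabolic_def
  proof safe
    show "w' permutes {1..n}" unfolding w'_def
      by (rule permutes_compose[OF wp permutes_swap_id]) (use win p in auto)
  next
    fix m assume "m \<in> J"
    then have "w m < w (m+1)" using w unfolding parabolic_def by auto
    moreover have "\<not> (m = i \<and> m + 1 = k)" using p by auto
    ultimately show "w' m < w' (m+1)" using cmp[of m "m+1"] p by auto
  qed
  show "(i,k) \<notin> inversions n w" unfolding inversions_def using p by auto
  show "inversions n w' = insert (i,k) (inversions n w)"
    unfolding inversions_def
  proof (rule set_eqI)
    fix x :: "nat \<times> nat"
    obtain s t where x: "x = (s,t)" by fastforce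
    show "x \<in> {(s,t). 1 \<le> s \<and> s < t \<and> t \<le> n \<and> w' s > w' t} \<longleftrightarrow>
      x \<in> insert (i,k) {(s,t). 1 \<le> s \<and> s < t \<and> t \<le> n \<and> w s > w t}"
    proof (cases "s = i \<and> t = k")
      case True then show ?thesis using x wik p by auto
    next
      case False
      then show ?thesis using x cmp[of t s] p by auto
    qed
  qed
qed


definition below_set :: "nat \<Rightarrow> (nat \<times> nat) set \<Rightarrow> nat \<Rightarrow> nat set" where
  "below_set n I s = {t \<in> {1..n}. (t < s \<and> (t,s) \<notin> I) \<or> (s < t \<and> (s,t) \<in> I)}"

lemma perm_val:
  assumes u: "u permutes {1..n}" and s: "s \<in> {1..n}"
  shows "u s = card (below_set n (inversions n u) s) + 1"
proof -
  have injo: "inj_on u {1..n}" using permutes_inj_on[OF u] .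
  have eq: "below_set n (inversions n u) s = {t \<in> {1..n}. u t < u s}"
  proof (rule set_eqI)
    fix t
    have "t \<noteq> s \<Longrightarrow> u t \<noteq> u s" using permutes_inj[OF u] unfolding inj_def by blast
    then show "t \<in> below_set n (inversions n u) s \<longleftrightarrow> t \<in> {t \<in> {1..n}. u t < u s}"
      unfolding below_set_def inversions_def using s by (cases "t < s"; cases "s < t") auto
  qed
  have img: "u ` {t \<in> {1..n}. u t < u s} = {1..<u s}"
  proof -
    have "u ` {t \<in> {1..n}. u t < u s} = {x \<in> u ` {1..n}. x < u s}" by auto
    also have "\<dots> = {x \<in> {1..n}. x < u s}" using permutes_image[OF u] by simp
    also have "\<dots> = {1..<u s}" using permutes_in_image[OF u, of s] s by auto
    finally show ?thesis .
  qed
  have "card {t \<in> {1..n}. u t < u s} = card {1..<u s}"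
  proof -
    have "inj_on u {t \<in> {1..n}. u t < u s}" by (rule inj_on_subset[OF injo]) auto
    then show ?thesis using card_image img by metis
  qed
  moreover have "u s \<ge> 1" using permutes_in_image[OF u, of s] s by auto
  ultimately show ?thesis using eq by simp
qed

lemma inv_eq_imp_eq:
  assumes u: "u permutes {1..n}" and v: "v permutes {1..n}"
    and e: "inversions n u = inversions n v"
  shows "u = v"
proof
  fix s
  show "u s = v s"
  proof (cases "s \<in> {1..n}")
    case True then show ?thesis using perm_val[OF u True] perm_val[OF v True] e by simp
  next
    case False then show ?thesis using permutes_not_in[OF u] permutes_not_in[OF v] by simp
  qed
qed

lemma exists_min:
  "w \<in> parabolic n J \<Longrightarrow> \<exists>w'. w' \<in> parabolic n J \<and> J132_avoiding n J w' \<and> weak_le n w w' \<and>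
           (\<forall>v. v \<in> parabolic n J \<and> J132_avoiding n J v \<and> weak_le n w v \<longrightarrow> weak_le n w' v)"
proof (induction "n * n - card (inversions n w)" arbitrary: w rule: less_induct)
  case less
  show ?case
  proof (cases "J132_avoiding n J w")
    case True then show ?thesis using less.prems unfolding weak_le_def by blast
  next
    case False
    then obtain i j k where p: "1 \<le> i" "i < j" "j < k" "k \<le> n"
      "\<not> same_region J i j" "\<not> same_region J j k" "w k < w j" "w k = w i + 1"
      unfolding J132_avoiding_def has_J132_def by blast
    define w1 where "w1 = transpose (w i) (w i + 1) \<circ> w"
    have s1: "w1 \<in> parabolic n J" "inversions n w1 = insert (i,k) (inversions n w)"
      "(i,k) \<notin> inversions n w"
      using step[OF less.prems p(1-4) p(8)] unfolding w1_def by auto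
    have fin: "finite (inversions n w1)"
      by (rule finite_subset[of _ "{1..n} \<times> {1..n}"]) (auto simp: inversions_def)
    have "card (inversions n w1) \<le> card ({1..n} \<times> {1..n})"
      by (rule card_mono) (auto simp: inversions_def)
    then have cb: "card (inversions n w1) \<le> n * n" by simp
    have "card (inversions n w1) = Suc (card (inversions n w))"
      using s1 fin by simp
    then have "n * n - card (inversions n w1) < n * n - card (inversions n w)" using cb by linarith
    then obtain w' where w': "w' \<in> parabolic n J" "J132_avoiding n J w'" "weak_le n w1 w'"
      "\<forall>v. v \<in> parabolic n J \<and> J132_avoiding n J v \<and> weak_le n w1 v \<longrightarrow> weak_le n w' v"
      using less.hyps[OF _ s1(1)] by blast
    have "weak_le n w w'" using w'(3) s1(2) unfolding weak_le_def by blast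
    moreover have "weak_le n w' v" if v: "v \<in> parabolic n J" "J132_avoiding n J v" "weak_le n w v" for v
    proof -
      have "v i > v k"
        using forced[of w n v J i j k] v less.prems p unfolding parabolic_def by blast
      then have "(i,k) \<in> inversions n v" using p unfolding inversions_def by auto
      then have "weak_le n w1 v" using v(3) unfolding weak_le_def s1(2) by blast
      then show ?thesis using w'(4) v by blast
    qed
    ultimately show ?thesis using w' by blast
  qed
qed

theorem lemma3p14:
  fixes n :: nat and J :: "nat set" and w :: "nat \<Rightarrow> nat"
  assumes "J \<subseteq> {1..<n}"
    and "w \<in> parabolic n J"
  shows "\<exists>!w'. w' \<in> parabolic n J \<and> J132_avoiding n J w' \<and> weak_le n w w' \<and>
           (\<forall>v. v \<in> parabolic n J \<and> J132_avoiding n J v \<and> weak_le n w v \<longrightarrow> weak_le n w' v)"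
proof -
  obtain w' where w': "w' \<in> parabolic n J \<and> J132_avoiding n J w' \<and> weak_le n w w' \<and>
           (\<forall>v. v \<in> parabolic n J \<and> J132_avoiding n J v \<and> weak_le n w v \<longrightarrow> weak_le n w' v)"
    using exists_min[OF assms(2)] by blast
  show ?thesis
  proof (rule ex1I[of _ w'])
    show "w' \<in> parabolic n J \<and> J132_avoiding n J w' \<and> weak_le n w w' \<and>
           (\<forall>v. v \<in> parabolic n J \<and> J132_avoiding n J v \<and> weak_le n w v \<longrightarrow> weak_le n w' v)"
      by (rule w')
  next
    fix y assume y: "y \<in> parabolic n J \<and> J132_avoiding n J y \<and> weak_le n w y \<and>
           (\<forall>v. v \<in> parabolic n J \<and> J132_avoiding n J v \<and> weak_le n w v \<longrightarrow> weak_le n y v)"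
    have "weak_le n y w'" "weak_le n w' y" using y w' by blast+
    then have "inversions n y = inversions n w'" unfolding weak_le_def by blast
    then show "y = w'" using inv_eq_imp_eq y w' unfolding parabolic_def by blast
  qed
qed

end
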